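(* Any satisfiable $d$-dim linear system $S$ with no divisibility constraints has a solution $x\in\mathbb{Z}^d$ such that $\|x\|_1\leq\left(2+d+d\cdot\|S\|\right)^{2d+1}$.
   Context: For a variable $\mathbf{x}$ ranging over $\mathbb{Z}^d$, a $d$-dim linear system without divisibility constraints is a propositional formula (boolean combination) whose atoms are equality constraints $\langle\alpha,\mathbf{x}\rangle=c$ and inequality constraints $\langle\alpha,\mathbf{x}\rangle\geq c$ with $\alpha\in\mathbb{Z}^d$, $c\in\mathbb{Z}$; its solutions are the $x\in\mathbb{Z}^d$ satisfying it. $\|S\|$ is the least $s\in\mathbb{N}$ with $\max\{\max_i|\alpha(i)|,|c|\}\leq s$ for all constraints in $S$. $\|x\|_1=\sum_i|x(i)|$. *)

theory Defs
  imports Main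
begin

datatype lsys =
    LEq "int list" int
  | LGeq "int list" int
  | LTrue
  | LFalse
  | LNot lsys
  | LAnd lsys lsys
  | LOr lsys lsys

definition ip :: "int list \<Rightarrow> int list \<Rightarrow> int" where
  "ip a x = (\<Sum>i<length a. a ! i * x ! i)"

fun sat :: "int list \<Rightarrow> lsys \<Rightarrow> bool" where
  "sat x (LEq a c) = (ip a x = c)"
| "sat x (LGeq a c) = (ip a x \<ge> c)"
| "sat x LTrue = True"
| "sat x LFalse = False"
| "sat x (LNot S) = (\<not> sat x S)"
| "sat x (LAnd S T) = (sat x S \<and> sat x T)"
| "sat x (LOr S T) = (sat x S \<or> sat x T)"

fun atoms :: "lsys \<Rightarrow> (int list \<times> int) set" where
  "atoms (LEq a c) = {(a, c)}"
| "atoms (LGeq a c) = {(a, c)}"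
| "atoms LTrue = {}"
| "atoms LFalse = {}"
| "atoms (LNot S) = atoms S"
| "atoms (LAnd S T) = atoms S \<union> atoms T"
| "atoms (LOr S T) = atoms S \<union> atoms T"

definition dim_sys :: "nat \<Rightarrow> lsys \<Rightarrow> bool" where
  "dim_sys d S = (\<forall>(a, c) \<in> atoms S. length a = d)"

definition sys_norm :: "lsys \<Rightarrow> nat" where
  "sys_norm S = (LEAST s::nat. \<forall>(a, c) \<in> atoms S.
      (\<forall>i < length a. \<bar>a ! i\<bar> \<le> int s) \<and> \<bar>c\<bar> \<le> int s)"

definition norm1 :: "int list \<Rightarrow> int" where
  "norm1 x = (\<Sum>i<length x. \<bar>x ! i\<bar>)"

end

theory Submission
  imports Defs Complex_Main "HOL-Library.Function_Algebras" "HOL-Library.FuncSet"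
begin


lemma siegel:
  fixes R :: "(nat \<Rightarrow> int) set" and n B :: nat
  assumes finR: "finite R" and cR: "card R < n"
    and bd: "\<forall>g\<in>R. \<forall>i<n. \<bar>g i\<bar> \<le> int B" and B1: "B \<ge> 1"
  shows "\<exists>x. (\<forall>i. i \<ge> n \<longrightarrow> x i = 0) \<and> (\<exists>i<n. x i \<noteq> 0) \<and>
     (\<forall>i<n. \<bar>x i\<bar> \<le> int ((n*B)^(n-1))) \<and> (\<forall>g\<in>R. (\<Sum>i<n. g i * x i) = 0)"
proof -
  define H where "H = (n*B)^(n-1)"
  define X where "X = PiE {..<n} (\<lambda>_. {0..int H})"
  define F where "F = (\<lambda>x. restrict (\<lambda>g. \<Sum>i<n. (g i * x i + max 0 (- g i) * int H)) R)"
  have n1: "n \<ge> 1" using cR by simp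
  have cX: "card X = (H+1)^n" unfolding X_def by (simp add: card_PiE nat_add_distrib)
  have FX: "F ` X \<subseteq> PiE R (\<lambda>_. {0..int (n*B*H)})"
  proof
    fix y assume "y \<in> F ` X"
    then obtain x where x: "x \<in> X" and y: "y = F x" by blast
    have "F x g \<in> {0..int (n*B*H)}" if g: "g \<in> R" for g
    proof -
      have t: "0 \<le> g i * x i + max 0 (- g i) * int H \<and> g i * x i + max 0 (- g i) * int H \<le> int B * int H"
        if i: "i < n" for i
      proof -
        have "x i \<in> {0..int H}" using PiE_mem[OF x[unfolded X_def]] i by blast
        then have xi: "0 \<le> x i" "x i \<le> int H" by auto
        have gi: "\<bar>g i\<bar> \<le> int B" using bd g i by blast
        show ?thesis
        proof (cases "g i \<ge> 0")
          case True
          have "g i * x i \<le> int B * int H" using True xi gi by (intro mult_mono) auto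
          moreover have "0 \<le> g i * x i" using True xi by simp
          ultimately show ?thesis using True by simp
        next
          case False
          have "g i * x i + (- g i) * int H = (- g i) * (int H - x i)" by (simp add: algebra_simps)
          moreover have "(- g i) * (int H - x i) \<le> int B * int H"
            using False xi gi by (intro mult_mono) auto
          moreover have "0 \<le> (- g i) * (int H - x i)" using False xi by (intro mult_nonneg_nonneg) auto
          ultimately show ?thesis using False by simp
        qed
      qed
      have "0 \<le> (\<Sum>i<n. g i * x i + max 0 (- g i) * int H)"
        using t by (intro sum_nonneg) auto
      moreover have "(\<Sum>i<n. g i * x i + max 0 (- g i) * int H) \<le> (\<Sum>i<n. int B * int H)"
        using t by (intro sum_mono) auto
      moreover have "(\<Sum>i<n. int B * int H) = int (n*B*H)" by simp
      moreover have "F x g = (\<Sum>i<n. g i * x i + max 0 (- g i) * int H)"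
        using g unfolding F_def restrict_def by simp
      ultimately show ?thesis unfolding atLeastAtMost_iff by linarith
    qed
    then show "y \<in> PiE R (\<lambda>_. {0..int (n*B*H)})" unfolding y F_def PiE_def Pi_def by simp
  qed
  have "card (F ` X) \<le> card (PiE R (\<lambda>_. {0..int (n*B*H)}))"
    using FX finR by (intro card_mono) (auto intro: finite_PiE)
  also have "\<dots> = (n*B*H+1) ^ card R" using finR by (simp add: card_PiE nat_add_distrib del: of_nat_mult)
  also have "\<dots> \<le> (n*B*H+1) ^ (n-1)" using cR by (intro power_increasing) auto
  also have "\<dots> \<le> ((n*B)*(H+1)) ^ (n-1)"
    using n1 B1 by (intro power_mono) (auto simp: algebra_simps)
  also have "\<dots> = H * (H+1)^(n-1)" by (metis H_def power_mult_distrib)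
  also have "\<dots> < (H+1) * (H+1)^(n-1)" by simp
  also have "\<dots> = card X" using n1 cX by (simp add: power_eq_if)
  finally have "card (F ` X) < card X" .
  then have "\<not> inj_on F X" using card_image by fastforce
  then obtain x y where x: "x \<in> X" and y: "y \<in> X" and xy: "x \<noteq> y" and Fxy: "F x = F y"
    unfolding inj_on_def by blast
  obtain j where j: "j < n" "x j \<noteq> y j"
    using xy PiE_ext[OF x[unfolded X_def] y[unfolded X_def]] lessThan_iff by blast
  define z where "z = (\<lambda>i. if i < n then x i - y i else 0)"
  have "\<forall>g\<in>R. (\<Sum>i<n. g i * z i) = 0"
  proof
    fix g assume g: "g \<in> R"
    have "(\<Sum>i<n. g i * x i + max 0 (- g i) * int H) = (\<Sum>i<n. g i * y i + max 0 (- g i) * int H)"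
    proof -
      have "F x g = F y g" using Fxy by simp
      then show ?thesis using g unfolding F_def restrict_def by simp
    qed
    then have "(\<Sum>i<n. g i * x i) = (\<Sum>i<n. g i * y i)" by (simp add: sum.distrib)
    then show "(\<Sum>i<n. g i * z i) = 0" by (simp add: z_def right_diff_distrib sum_subtractf)
  qed
  moreover have "\<forall>i<n. \<bar>z i\<bar> \<le> int H"
  proof (intro allI impI)
    fix i assume i: "i < n"
    have "x i \<in> {0..int H}" "y i \<in> {0..int H}" using PiE_mem[OF x[unfolded X_def]] PiE_mem[OF y[unfolded X_def]] i by blast+
    then show "\<bar>z i\<bar> \<le> int H" using i unfolding z_def by auto
  qed
  ultimately show ?thesis using j unfolding H_def
    by (intro exI[of _ z]) (auto simp: z_def)
qed


definition scl :: "real \<Rightarrow> (nat \<Rightarrow> real) \<Rightarrow> nat \<Rightarrow> real" where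
  "scl c f = (\<lambda>i. c * f i)"

interpretation fv: vector_space scl
  by unfold_locales (auto simp: scl_def fun_eq_iff algebra_simps)

lemma sum_fun_apply: "(sum F A) k = (\<Sum>a\<in>A. F a k)" for F :: "'a \<Rightarrow> nat \<Rightarrow> real"
  by (induction A rule: infinite_finite_induct) auto

definition dotr :: "nat \<Rightarrow> (nat \<Rightarrow> real) \<Rightarrow> (nat \<Rightarrow> real) \<Rightarrow> real" where
  "dotr n f u = (\<Sum>i<n. f i * u i)"
definition rv :: "(nat \<Rightarrow> int) \<Rightarrow> nat \<Rightarrow> real" where
  "rv x = (\<lambda>i. real_of_int (x i))"
definition rvn :: "nat \<Rightarrow> (nat \<Rightarrow> int) \<Rightarrow> nat \<Rightarrow> real" where
  "rvn n g = (\<lambda>i. if i < n then real_of_int (g i) else 0)"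
definition inK :: "nat \<Rightarrow> (nat \<Rightarrow> int) set \<Rightarrow> (nat \<Rightarrow> real) \<Rightarrow> bool" where
  "inK n G u = (\<forall>g\<in>G. 0 \<le> dotr n (rv g) u)"
definition supp :: "nat \<Rightarrow> (nat \<Rightarrow> 'a::zero) \<Rightarrow> bool" where
  "supp n u = (\<forall>i. i \<ge> n \<longrightarrow> u i = 0)"
definition ee :: "nat \<Rightarrow> nat \<Rightarrow> real" where
  "ee j = (\<lambda>k. if k = j then 1 else 0)"

lemma dotr_rvn: "dotr n (rvn n g) u = dotr n (rv g) u"
  unfolding dotr_def rvn_def rv_def by (intro sum.cong) auto

lemma subspace_dotr: "fv.subspace {f. dotr n f u = 0}"
  unfolding fv.subspace_def dotr_def scl_def
  by (auto simp: algebra_simps sum.distrib sum_distrib_left[symmetric])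

lemma supp_in_span: assumes "supp n f" shows "f \<in> fv.span (ee ` {..<n})"
proof -
  have "f = (\<Sum>j<n. scl (f j) (ee j))"
  proof
    fix k show "f k = (\<Sum>j<n. scl (f j) (ee j)) k"
    proof -
      have "(\<Sum>j<n. scl (f j) (ee j)) k = (\<Sum>j<n. if k = j then f j else 0)"
        unfolding sum_fun_apply scl_def ee_def by (intro sum.cong) auto
      then show ?thesis using assms unfolding supp_def by (cases "k < n") auto
    qed
  qed
  also have "\<dots> \<in> fv.span (ee ` {..<n})"
    by (intro fv.span_sum fv.span_scale fv.span_base) auto
  finally show ?thesis .
qed

lemma card_ee: "card (ee ` {..<n}) = n"
proof -
  have "inj_on ee {..<n}"
    unfolding inj_on_def ee_def by (metis zero_neq_one)
  then show ?thesis by (simp add: card_image)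
qed

lemma indep_card_le:
  assumes "fv.independent S" "\<forall>f\<in>S. supp n f"
  shows "finite S \<and> card S \<le> n"
  using fv.independent_span_bound[of "ee ` {..<n}" S] assms supp_in_span card_ee by auto

lemma dotr_ee: "i < n \<Longrightarrow> dotr n (ee i) u = u i"
proof -
  assume i: "i < n"
  have "dotr n (ee i) u = (\<Sum>k<n. if i = k then u k else 0)"
    unfolding dotr_def ee_def by (intro sum.cong) auto
  then show ?thesis using i by simp
qed



lemma dotr_rv_int: "dotr n (rv g) (rv x) = real_of_int (\<Sum>i<n. g i * x i)"
  unfolding dotr_def rv_def by simp

lemma dotr_scale: "dotr n f (\<lambda>i. c * u i) = c * dotr n f u"
  unfolding dotr_def by (simp add: sum_distrib_left algebra_simps)

lemma extreme_int:
  fixes G :: "(nat \<Rightarrow> int) set" and w :: "nat \<Rightarrow> real"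
  assumes finG: "finite G" and bd: "\<forall>g\<in>G. \<forall>i<n. \<bar>g i\<bar> \<le> int B" and B1: "B \<ge> 1"
    and wK: "inK n G w" and ws: "supp n w" and w0: "w \<noteq> 0"
    and ext: "\<forall>v. supp n v \<longrightarrow> (\<forall>g\<in>G. dotr n (rv g) w = 0 \<longrightarrow> dotr n (rv g) v = 0)
               \<longrightarrow> (\<exists>c. v = (\<lambda>i. c * w i))"
  shows "\<exists>x. supp n x \<and> (\<forall>i<n. \<bar>x i\<bar> \<le> int ((n*B)^(n-1))) \<and> inK n G (rv x)
            \<and> (\<exists>l>0. w = (\<lambda>i. l * rv x i))"
proof -
  define T where "T = {g\<in>G. dotr n (rv g) w = 0}"
  define V where "V = rvn n ` T"
  obtain Bs where BsV: "Bs \<subseteq> V" and indep: "fv.independent Bs" and Vsp: "V \<subseteq> fv.span Bs"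
    using fv.maximal_independent_subset by blast
  have finT: "finite T" using finG unfolding T_def by simp
  have suppBs: "\<forall>f\<in>Bs. supp n f" using BsV unfolding V_def supp_def rvn_def by auto
  have finBs: "finite Bs" and cBs: "card Bs \<le> n" using indep_card_le[OF indep suppBs] by auto
  have BsW: "Bs \<subseteq> {f. dotr n f w = 0}"
    using BsV unfolding V_def T_def by (auto simp: dotr_rvn)
  have cBs2: "card Bs \<noteq> n"
  proof
    assume cn: "card Bs = n"
    have "ee i \<in> fv.span Bs" if i: "i < n" for i
    proof (rule ccontr)
      assume ni: "ee i \<notin> fv.span Bs"
      then have "fv.independent (insert (ee i) Bs)" using fv.independent_insertI indep by blast
      moreover have "\<forall>f\<in>insert (ee i) Bs. supp n f" using suppBs i unfolding supp_def ee_def by auto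
      ultimately have "card (insert (ee i) Bs) \<le> n" using indep_card_le by blast
      moreover have "ee i \<notin> Bs" using ni fv.span_base by blast
      ultimately show False using cn finBs by simp
    qed
    moreover have "fv.span Bs \<subseteq> {f. dotr n f w = 0}"
      using BsW subspace_dotr by (rule fv.span_minimal)
    ultimately have "\<forall>i<n. w i = 0" using dotr_ee by fastforce
    then have "w = 0" using ws unfolding supp_def by (auto simp: fun_eq_iff not_less[symmetric])
    then show False using w0 by simp
  qed
  define p where "p = (\<lambda>b. SOME g. g \<in> T \<and> rvn n g = b)"
  have p: "p b \<in> T \<and> rvn n (p b) = b" if "b \<in> Bs" for b
  proof -
    have "\<exists>g. g \<in> T \<and> rvn n g = b" using that BsV unfolding V_def by auto
    then show ?thesis unfolding p_def by (rule someI_ex)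
  qed
  define T' where "T' = p ` Bs"
  have finT': "finite T'" using finBs unfolding T'_def by simp
  have cT': "card T' < n" using card_image_le[OF finBs, of p] cBs cBs2 unfolding T'_def by linarith
  have T'G: "T' \<subseteq> G" using p unfolding T'_def T_def by auto
  obtain x where xs: "\<forall>i. i \<ge> n \<longrightarrow> x i = 0" and xnz: "\<exists>i<n. x i \<noteq> 0"
    and xb: "\<forall>i<n. \<bar>x i\<bar> \<le> int ((n*B)^(n-1))" and x0: "\<forall>g\<in>T'. (\<Sum>i<n. g i * x i) = 0"
    using siegel[OF finT' cT' _ B1] bd T'G by blast
  have "Bs \<subseteq> {f. dotr n f (rv x) = 0}"
  proof
    fix b assume b: "b \<in> Bs"
    have "dotr n b (rv x) = dotr n (rvn n (p b)) (rv x)" using p[OF b] by simp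
    also have "\<dots> = 0" unfolding dotr_rvn dotr_rv_int using x0 b unfolding T'_def by simp
    finally show "b \<in> {f. dotr n f (rv x) = 0}" by simp
  qed
  then have "fv.span Bs \<subseteq> {f. dotr n f (rv x) = 0}"
    using subspace_dotr by (rule fv.span_minimal)
  then have kill: "\<forall>g\<in>G. dotr n (rv g) w = 0 \<longrightarrow> dotr n (rv g) (rv x) = 0"
    using Vsp unfolding V_def T_def by (auto simp flip: dotr_rvn)
  have "supp n (rv x)" using xs unfolding supp_def rv_def by simp
  then obtain c where c: "rv x = (\<lambda>i. c * w i)" using ext kill by blast
  obtain j where j: "j < n" "x j \<noteq> 0" using xnz by blast
  have c0: "c \<noteq> 0"
  proof
    assume "c = 0"
    then have "rv x j = 0" using c by simp
    then show False using j unfolding rv_def by simp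
  qed
  have dg: "dotr n (rv g) (rv x) = c * dotr n (rv g) w" for g using c dotr_scale by metis
  show ?thesis
  proof (cases "c > 0")
    case True
    have "inK n G (rv x)" using wK True unfolding inK_def dg by simp
    moreover have "w = (\<lambda>i. (1/c) * rv x i)" using c c0 by (auto simp: fun_eq_iff)
    then have "\<exists>l>0. w = (\<lambda>i. l * rv x i)" using True by (intro exI[of _ "1/c"]) simp
    ultimately show ?thesis using xs xb True unfolding supp_def by (intro exI[of _ x]) auto
  next
    case False
    then have cn: "c < 0" using c0 by simp
    define x' where "x' = (\<lambda>i. - x i)"
    have rx': "rv x' = (\<lambda>i. - c * w i)" using c unfolding x'_def rv_def by (auto simp: fun_eq_iff)
    have "inK n G (rv x')" using wK cn unfolding inK_def rx' dotr_scale
      by (simp add: mult_nonpos_nonneg)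
    moreover have "w = (\<lambda>i. (-1/c) * rv x' i)" using rx' c0 by (auto simp: fun_eq_iff)
    then have "\<exists>l>0. w = (\<lambda>i. l * rv x' i)" using cn by (intro exI[of _ "-1/c"]) simp
    moreover have "supp n x'" using xs unfolding supp_def x'_def by simp
    moreover have "\<forall>i<n. \<bar>x' i\<bar> \<le> int ((n*B)^(n-1))" using xb unfolding x'_def by simp
    ultimately show ?thesis using cn by (intro exI[of _ x']) auto
  qed
qed



definition good :: "nat \<Rightarrow> (nat \<Rightarrow> int) set \<Rightarrow> nat \<Rightarrow> (nat \<Rightarrow> int) \<Rightarrow> bool" where
  "good n G H x = (supp n x \<and> (\<forall>i<n. \<bar>x i\<bar> \<le> int H) \<and> inK n G (rv x))"

lemma dotr_comb: "dotr n f (\<lambda>i. a * u i + b * v i) = a * dotr n f u + b * dotr n f v"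
  unfolding dotr_def by (simp add: algebra_simps sum.distrib sum_distrib_left)

lemma dotr_lin: "dotr n f (\<lambda>i. u i + t * d i) = dotr n f u + t * dotr n f d"
  using dotr_comb[of n f 1 u t d] by simp

lemma step:
  assumes finG: "finite G" and uK: "inK n G u"
    and tight: "\<forall>g\<in>G. dotr n (rv g) u = 0 \<longrightarrow> dotr n (rv g) d = 0"
    and neg: "\<exists>g\<in>G. dotr n (rv g) d < 0"
  shows "\<exists>t>0. inK n G (\<lambda>i. u i + t * d i) \<and>
     card {g\<in>G. 0 < dotr n (rv g) (\<lambda>i. u i + t * d i)} < card {g\<in>G. 0 < dotr n (rv g) u}"
proof -
  define D where "D = {g\<in>G. dotr n (rv g) d < 0}"
  define q where "q = (\<lambda>g. dotr n (rv g) u / (- dotr n (rv g) d))"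
  define t where "t = Min (q ` D)"
  have finD: "finite D" and neD: "D \<noteq> {}" using finG neg unfolding D_def by auto
  have posD: "0 < dotr n (rv g) u" if "g \<in> D" for g
  proof -
    have "0 \<le> dotr n (rv g) u" using uK that unfolding inK_def D_def by auto
    moreover have "dotr n (rv g) u \<noteq> 0" using tight that unfolding D_def by force
    ultimately show ?thesis by simp
  qed
  have qpos: "0 < q g" if "g \<in> D" for g
    using posD[OF that] that unfolding q_def D_def by (auto simp: divide_pos_neg)
  have "t \<in> q ` D" using Min_in[of "q ` D"] finD neD unfolding t_def by auto
  then obtain g0 where g0: "g0 \<in> D" "t = q g0" by blast
  have tle: "t \<le> q g" if "g \<in> D" for g unfolding t_def using finD that by simp
  have tpos: "0 < t" using qpos g0 by simp
  define u1 where "u1 = (\<lambda>i. u i + t * d i)"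
  have du1: "dotr n (rv g) u1 = dotr n (rv g) u + t * dotr n (rv g) d" for g
    unfolding u1_def by (rule dotr_lin)
  have u1K: "inK n G u1" unfolding inK_def
  proof
    fix g assume g: "g \<in> G"
    show "0 \<le> dotr n (rv g) u1"
    proof (cases "g \<in> D")
      case True
      then have dn: "dotr n (rv g) d < 0" unfolding D_def by simp
      have "t * (- dotr n (rv g) d) \<le> q g * (- dotr n (rv g) d)"
        using tle[OF True] dn by (intro mult_right_mono) auto
      also have "\<dots> = dotr n (rv g) u" unfolding q_def using dn by simp
      finally show ?thesis unfolding du1 by simp
    next
      case False
      then have "0 \<le> dotr n (rv g) d" using g unfolding D_def by simp
      moreover have "0 \<le> dotr n (rv g) u" using uK g unfolding inK_def by simp
      ultimately show ?thesis unfolding du1 using tpos by simp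
    qed
  qed
  have sub: "{g\<in>G. 0 < dotr n (rv g) u1} \<subset> {g\<in>G. 0 < dotr n (rv g) u}"
  proof
    show "{g\<in>G. 0 < dotr n (rv g) u1} \<subseteq> {g\<in>G. 0 < dotr n (rv g) u}"
    proof
      fix g assume g: "g \<in> {g\<in>G. 0 < dotr n (rv g) u1}"
      have "0 \<le> dotr n (rv g) u" using uK g unfolding inK_def by simp
      moreover have "dotr n (rv g) u \<noteq> 0" using g tight unfolding du1 by auto
      ultimately show "g \<in> {g\<in>G. 0 < dotr n (rv g) u}" using g by simp
    qed
    have "dotr n (rv g0) u1 = 0"
      using g0 posD[OF g0(1)] unfolding du1 q_def D_def by auto
    moreover have "g0 \<in> {g\<in>G. 0 < dotr n (rv g) u}" using g0 posD unfolding D_def by auto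
    ultimately show "{g\<in>G. 0 < dotr n (rv g) u1} \<noteq> {g\<in>G. 0 < dotr n (rv g) u}"
      by (metis (mono_tags, lifting) less_irrefl mem_Collect_eq)
  qed
  have "card {g\<in>G. 0 < dotr n (rv g) u1} < card {g\<in>G. 0 < dotr n (rv g) u}"
    using finG by (intro psubset_card_mono[OF _ sub]) auto
  then show ?thesis using tpos u1K unfolding u1_def by blast
qed

lemma minkowski:
  fixes G :: "(nat \<Rightarrow> int) set"
  assumes finG: "finite G" and bd: "\<forall>g\<in>G. \<forall>i<n. \<bar>g i\<bar> \<le> int B" and B1: "B \<ge> 1"
    and coord: "\<forall>i<n. \<exists>g\<in>G. (\<forall>k<n. k \<noteq> i \<longrightarrow> g k = 0) \<and> (g i = 1 \<or> g i = -1)"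
  shows "inK n G u \<Longrightarrow> supp n u \<Longrightarrow> \<exists>W \<mu>. finite W \<and> (\<forall>x\<in>W. good n G ((n*B)^(n-1)) x)
            \<and> (\<forall>x\<in>W. 0 \<le> \<mu> x) \<and> (\<forall>i. u i = (\<Sum>x\<in>W. \<mu> x * rv x i))"
proof (induction "card {g\<in>G. 0 < dotr n (rv g) u}" arbitrary: u rule: less_induct)
  case less
  note uK = less.prems(1) and us = less.prems(2)
  have "\<forall>i. \<exists>g. i < n \<longrightarrow> g \<in> G \<and> (\<forall>k<n. k \<noteq> i \<longrightarrow> g k = 0) \<and> (g i = 1 \<or> g i = -1)"
    using coord by blast
  then obtain cg where cg0: "\<forall>i. i < n \<longrightarrow> cg i \<in> G \<and> (\<forall>k<n. k \<noteq> i \<longrightarrow> cg i k = 0) \<and> (cg i i = 1 \<or> cg i i = -1)"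
    using choice[of "\<lambda>i g. i < n \<longrightarrow> g \<in> G \<and> (\<forall>k<n. k \<noteq> i \<longrightarrow> g k = 0) \<and> (g i = 1 \<or> g i = -1)"] by blast
  have cgG: "cg i \<in> G" and cgk: "\<And>k. k < n \<Longrightarrow> k \<noteq> i \<Longrightarrow> cg i k = 0" and cgi: "cg i i \<noteq> 0" if "i < n" for i
    using cg0 that by auto
  have dcg: "dotr n (rv (cg i)) v = real_of_int (cg i i) * v i" if i: "i < n" for i v
  proof -
    have "dotr n (rv (cg i)) v = (\<Sum>k<n. if k = i then real_of_int (cg i i) * v i else 0)"
      unfolding dotr_def rv_def using cgk[OF i] by (intro sum.cong) auto
    then show ?thesis using i by simp
  qed
  define hv where "hv = (\<lambda>v. \<Sum>i<n. dotr n (rv (cg i)) v)"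
  have hv_nonneg: "0 \<le> hv v" if "inK n G v" for v
    unfolding hv_def using that cgG unfolding inK_def by (intro sum_nonneg) auto
  have hv_zero: "v i = 0" if "inK n G v" "hv v = 0" "i < n" for v i
  proof -
    have "\<forall>j\<in>{..<n}. dotr n (rv (cg j)) v = 0"
      using that(2) sum_nonneg_eq_0_iff[of "{..<n}" "\<lambda>j. dotr n (rv (cg j)) v"] that(1) cgG
      unfolding hv_def inK_def by auto
    then have "real_of_int (cg i i) * v i = 0" using dcg that(3) by auto
    moreover have "cg i i \<noteq> 0" using cgi[OF that(3)] by auto
    ultimately show ?thesis by simp
  qed
  have hv_comb: "hv (\<lambda>i. a * v i + b * w i) = a * hv v + b * hv w" for a b v w
    unfolding hv_def dotr_comb by (simp add: sum.distrib sum_distrib_left)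
  have supp_eq0: "v = 0" if "supp n v" "\<forall>i<n. v i = 0" for v :: "nat \<Rightarrow> real"
  proof
    fix i show "v i = 0 i" using that unfolding supp_def by (cases "i < n") (auto simp: zero_fun_def)
  qed
  show ?case
  proof (cases "u = 0")
    case True
    then show ?thesis by (intro exI[of _ "{}"]) auto
  next
    case u0: False
    show ?thesis
    proof (cases "\<forall>v. supp n v \<longrightarrow> (\<forall>g\<in>G. dotr n (rv g) u = 0 \<longrightarrow> dotr n (rv g) v = 0)
               \<longrightarrow> (\<exists>c. v = (\<lambda>i. c * u i))")
      case True
      obtain x l where x: "supp n x" "\<forall>i<n. \<bar>x i\<bar> \<le> int ((n*B)^(n-1))" "inK n G (rv x)"
        and l: "l > 0" "u = (\<lambda>i. l * rv x i)"
        using extreme_int[OF finG bd B1 uK us u0 True] by blast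
      show ?thesis
        by (intro exI[of _ "{x}"] exI[of _ "\<lambda>_. l"]) (use x l in \<open>auto simp: good_def\<close>)
    next
      case False
      then obtain v where vs: "supp n v"
        and vk: "\<forall>g\<in>G. dotr n (rv g) u = 0 \<longrightarrow> dotr n (rv g) v = 0"
        and vnp: "\<forall>c. v \<noteq> (\<lambda>i. c * u i)" by blast
      have hu: "0 < hv u"
      proof -
        have "hv u \<noteq> 0" using hv_zero[OF uK] supp_eq0[OF us] u0 by blast
        then show ?thesis using hv_nonneg[OF uK] by simp
      qed
      define r where "r = hv v / hv u"
      define v' where "v' = (\<lambda>i. 1 * v i + (- r) * u i)"
      have hv': "hv v' = 0" unfolding v'_def hv_comb r_def using hu by simp
      have v's: "supp n v'" using vs us unfolding supp_def v'_def by simp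
      have dv': "dotr n f v' = dotr n f v - r * dotr n f u" for f
        unfolding v'_def dotr_comb by simp
      have v'k: "\<forall>g\<in>G. dotr n (rv g) u = 0 \<longrightarrow> dotr n (rv g) v' = 0"
        using vk dv' by simp
      have v'nz: "v' \<noteq> 0"
      proof
        assume "v' = 0"
        then have "v = (\<lambda>i. r * u i)" unfolding v'_def by (auto simp: fun_eq_iff)
        then show False using vnp by blast
      qed
      have neg1: "\<exists>g\<in>G. dotr n (rv g) v' < 0"
      proof (rule ccontr)
        assume "\<not> ?thesis"
        then have "inK n G v'" unfolding inK_def by (auto simp: not_less)
        then have "\<forall>i<n. v' i = 0" using hv_zero hv' by blast
        then show False using supp_eq0[OF v's] v'nz by blast
      qed
      define mv where "mv = (\<lambda>i. - v' i)"
      have dmv: "dotr n f mv = - dotr n f v'" for f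
        unfolding mv_def dotr_def by (simp add: sum_negf)
      have neg2: "\<exists>g\<in>G. dotr n (rv g) mv < 0"
      proof (rule ccontr)
        assume "\<not> ?thesis"
        then have "inK n G mv" unfolding inK_def by (auto simp: not_less)
        moreover have "hv mv = 0" unfolding hv_def dmv using hv' unfolding hv_def by (simp add: sum_negf)
        ultimately have "\<forall>i<n. mv i = 0" using hv_zero by blast
        then have "\<forall>i<n. v' i = 0" unfolding mv_def by simp
        then show False using supp_eq0[OF v's] v'nz by blast
      qed
      have mvk: "\<forall>g\<in>G. dotr n (rv g) u = 0 \<longrightarrow> dotr n (rv g) mv = 0"
        using v'k dmv by simp
      obtain t1 where t1: "t1 > 0" "inK n G (\<lambda>i. u i + t1 * v' i)"
        "card {g\<in>G. 0 < dotr n (rv g) (\<lambda>i. u i + t1 * v' i)} < card {g\<in>G. 0 < dotr n (rv g) u}"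
        using step[OF finG uK v'k neg1] by blast
      obtain t2 where t2: "t2 > 0" "inK n G (\<lambda>i. u i + t2 * mv i)"
        "card {g\<in>G. 0 < dotr n (rv g) (\<lambda>i. u i + t2 * mv i)} < card {g\<in>G. 0 < dotr n (rv g) u}"
        using step[OF finG uK mvk neg2] by blast
      have s1: "supp n (\<lambda>i. u i + t1 * v' i)" using us v's unfolding supp_def by simp
      have s2: "supp n (\<lambda>i. u i + t2 * mv i)" using us v's unfolding supp_def mv_def by simp
      obtain W1 \<mu>1 where W1: "finite W1" "\<forall>x\<in>W1. good n G ((n*B)^(n-1)) x" "\<forall>x\<in>W1. 0 \<le> \<mu>1 x"
        "\<forall>i. u i + t1 * v' i = (\<Sum>x\<in>W1. \<mu>1 x * rv x i)"
        using less.hyps[OF t1(3) t1(2) s1] by blast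
      obtain W2 \<mu>2 where W2: "finite W2" "\<forall>x\<in>W2. good n G ((n*B)^(n-1)) x" "\<forall>x\<in>W2. 0 \<le> \<mu>2 x"
        "\<forall>i. u i + t2 * mv i = (\<Sum>x\<in>W2. \<mu>2 x * rv x i)"
        using less.hyps[OF t2(3) t2(2) s2] by blast
      define a where "a = t2 / (t1 + t2)"
      define b where "b = t1 / (t1 + t2)"
      define \<mu> where "\<mu> = (\<lambda>x. a * (if x \<in> W1 then \<mu>1 x else 0) + b * (if x \<in> W2 then \<mu>2 x else 0))"
      have ab: "a \<ge> 0" "b \<ge> 0" using t1 t2 unfolding a_def b_def by auto
      have "u i = (\<Sum>x\<in>W1 \<union> W2. \<mu> x * rv x i)" for i
      proof -
        have e1: "(\<Sum>x\<in>W1 \<union> W2. (if x \<in> W1 then \<mu>1 x else 0) * rv x i) = (\<Sum>x\<in>W1. \<mu>1 x * rv x i)"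
        proof -
          have "(\<Sum>x\<in>W1 \<union> W2. (if x \<in> W1 then \<mu>1 x else 0) * rv x i)
              = (\<Sum>x\<in>W1 \<union> W2. (if x \<in> W1 then \<mu>1 x * rv x i else 0))"
            by (intro sum.cong) auto
          also have "\<dots> = (\<Sum>x\<in>(W1 \<union> W2) \<inter> W1. \<mu>1 x * rv x i)"
            using W1(1) W2(1) by (intro sum.inter_restrict[symmetric]) auto
          also have "(W1 \<union> W2) \<inter> W1 = W1" by auto
          finally show ?thesis .
        qed
        have e2: "(\<Sum>x\<in>W1 \<union> W2. (if x \<in> W2 then \<mu>2 x else 0) * rv x i) = (\<Sum>x\<in>W2. \<mu>2 x * rv x i)"
        proof -
          have "(\<Sum>x\<in>W1 \<union> W2. (if x \<in> W2 then \<mu>2 x else 0) * rv x i)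
              = (\<Sum>x\<in>W1 \<union> W2. (if x \<in> W2 then \<mu>2 x * rv x i else 0))"
            by (intro sum.cong) auto
          also have "\<dots> = (\<Sum>x\<in>(W1 \<union> W2) \<inter> W2. \<mu>2 x * rv x i)"
            using W1(1) W2(1) by (intro sum.inter_restrict[symmetric]) auto
          also have "(W1 \<union> W2) \<inter> W2 = W2" by auto
          finally show ?thesis .
        qed
        have "(\<Sum>x\<in>W1 \<union> W2. \<mu> x * rv x i)
           = a * (\<Sum>x\<in>W1 \<union> W2. (if x \<in> W1 then \<mu>1 x else 0) * rv x i)
             + b * (\<Sum>x\<in>W1 \<union> W2. (if x \<in> W2 then \<mu>2 x else 0) * rv x i)"
          unfolding \<mu>_def by (simp add: sum.distrib sum_distrib_left algebra_simps)
        also have "\<dots> = a * (u i + t1 * v' i) + b * (u i + t2 * mv i)"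
          unfolding e1 e2 using W1(4) W2(4) by simp
        also have "\<dots> = u i"
        proof -
          have tt: "t1 + t2 > 0" using t1 t2 by simp
          have e: "a * (u i + t1 * v' i) + b * (u i + t2 * mv i) = (a + b) * u i + (a*t1 - b*t2) * v' i"
            unfolding mv_def by (simp add: algebra_simps)
          have "a + b = 1" unfolding a_def b_def using tt by (simp add: add_divide_distrib[symmetric])
          moreover have "a*t1 - b*t2 = 0" unfolding a_def b_def by simp
          ultimately show ?thesis using e by simp
        qed
        finally show ?thesis by simp
      qed
      moreover have "\<forall>x\<in>W1 \<union> W2. 0 \<le> \<mu> x"
        using W1(3) W2(3) ab unfolding \<mu>_def by auto
      ultimately show ?thesis using W1 W2
        by (intro exI[of _ "W1 \<union> W2"] exI[of _ \<mu>]) auto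
    qed
  qed
qed



lemma rv_inj: "inj_on rv W"
  unfolding inj_on_def rv_def by (auto simp: fun_eq_iff)

lemma carath:
  "finite W \<Longrightarrow> \<forall>x\<in>W. supp n x \<Longrightarrow> \<forall>x\<in>W. 0 \<le> \<mu> x \<Longrightarrow> \<forall>i. u i = (\<Sum>x\<in>W. \<mu> x * rv x i)
   \<Longrightarrow> \<exists>W' \<mu>'. W' \<subseteq> W \<and> card W' \<le> n \<and> (\<forall>x\<in>W'. 0 \<le> \<mu>' x) \<and> (\<forall>i. u i = (\<Sum>x\<in>W'. \<mu>' x * rv x i))"
proof (induction "card W" arbitrary: W \<mu> rule: less_induct)
  case less
  note finW = less.prems(1) and sW = less.prems(2) and \<mu>0 = less.prems(3) and uW = less.prems(4)
  show ?case
  proof (cases "fv.independent (rv ` W)")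
    case True
    have "\<forall>f\<in>rv ` W. supp n f" using sW unfolding supp_def rv_def by auto
    then have "card (rv ` W) \<le> n" using indep_card_le[OF True] by blast
    then have "card W \<le> n" using card_image[OF rv_inj] by simp
    then show ?thesis using \<mu>0 uW by blast
  next
    case False
    obtain c' where c'1: "\<exists>v\<in>rv ` W. c' v \<noteq> 0" and c'2: "(\<Sum>v\<in>rv ` W. scl (c' v) v) = 0"
      using False fv.dependent_finite[of "rv ` W"] finW by auto
    have "(\<Sum>x\<in>W. scl (c' (rv x)) (rv x)) = 0"
      using c'2 sum.reindex[OF rv_inj, of "\<lambda>v. scl (c' v) v" W] by simp
    then have csum0: "(\<Sum>x\<in>W. c' (rv x) * rv x i) = 0" for i
      using sum_fun_apply[of "\<lambda>x. scl (c' (rv x)) (rv x)" W i] unfolding scl_def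
      by (metis zero_fun_def)
    obtain c where cs: "\<forall>i. (\<Sum>x\<in>W. c x * rv x i) = 0" and cpos: "\<exists>x\<in>W. c x > 0"
    proof (cases "\<exists>x\<in>W. c' (rv x) > 0")
      case True
      then show ?thesis using that[of "\<lambda>x. c' (rv x)"] csum0 by blast
    next
      case False
      then obtain x where "x \<in> W" "c' (rv x) < 0" using c'1 by force
      moreover have "\<forall>i. (\<Sum>x\<in>W. - c' (rv x) * rv x i) = 0"
        using csum0 by (simp add: sum_negf)
      ultimately show ?thesis using that[of "\<lambda>x. - c' (rv x)"] by force
    qed
    define D where "D = {x\<in>W. c x > 0}"
    define q where "q = (\<lambda>x. \<mu> x / c x)"
    define t where "t = Min (q ` D)"
    have finD: "finite D" "D \<noteq> {}" using finW cpos unfolding D_def by auto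
    have "t \<in> q ` D" using Min_in finD unfolding t_def by auto
    then obtain x0 where x0: "x0 \<in> D" "t = q x0" by blast
    have tle: "t \<le> q x" if "x \<in> D" for x using finD that unfolding t_def by simp
    have t0: "0 \<le> t" using x0 \<mu>0 unfolding q_def D_def by auto
    define \<mu>' where "\<mu>' = (\<lambda>x. \<mu> x - t * c x)"
    have \<mu>'0: "\<forall>x\<in>W. 0 \<le> \<mu>' x"
    proof
      fix x assume x: "x \<in> W"
      show "0 \<le> \<mu>' x"
      proof (cases "c x > 0")
        case True
        then have "t * c x \<le> q x * c x" using tle[of x] x unfolding D_def by (intro mult_right_mono) auto
        also have "\<dots> = \<mu> x" unfolding q_def using True by simp
        finally show ?thesis unfolding \<mu>'_def by simp
      next
        case False
        then have "t * c x \<le> 0" using t0 by (simp add: mult_nonneg_nonpos)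
        then show ?thesis using \<mu>0 x unfolding \<mu>'_def by auto
      qed
    qed
    have x0z: "\<mu>' x0 = 0" using x0 unfolding \<mu>'_def q_def D_def by auto
    have x0W: "x0 \<in> W" using x0 unfolding D_def by simp
    have u': "u i = (\<Sum>x\<in>W - {x0}. \<mu>' x * rv x i)" for i
    proof -
      have "(\<Sum>x\<in>W. \<mu>' x * rv x i) = (\<Sum>x\<in>W. \<mu> x * rv x i) - t * (\<Sum>x\<in>W. c x * rv x i)"
        unfolding \<mu>'_def by (simp add: algebra_simps sum_subtractf sum_distrib_left)
      also have "\<dots> = u i" using uW cs by simp
      finally have "u i = (\<Sum>x\<in>W. \<mu>' x * rv x i)" by simp
      also have "\<dots> = \<mu>' x0 * rv x0 i + (\<Sum>x\<in>W - {x0}. \<mu>' x * rv x i)"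
        using sum.remove[OF finW x0W] by simp
      finally show ?thesis using x0z by simp
    qed
    have "card (W - {x0}) < card W" using finW x0W by (meson card_Diff1_less)
    then obtain W' \<mu>'' where "W' \<subseteq> W - {x0}" "card W' \<le> n" "\<forall>x\<in>W'. 0 \<le> \<mu>'' x"
        "\<forall>i. u i = (\<Sum>x\<in>W'. \<mu>'' x * rv x i)"
      using less.hyps[of "W - {x0}" \<mu>'] finW sW \<mu>'0 u' by auto
    then show ?thesis by blast
  qed
qed



lemma finite_atoms: "finite (atoms S)"
  by (induction S) auto

lemma norm_exists: "\<exists>s::nat. \<forall>(a, c) \<in> atoms S. (\<forall>i < length a. \<bar>a ! i\<bar> \<le> int s) \<and> \<bar>c\<bar> \<le> int s"
proof (induction S)
  case (LEq a c)
  define s where "s = nat (\<bar>c\<bar> + (\<Sum>i<length a. \<bar>a ! i\<bar>))"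
  have h: "\<bar>a ! i\<bar> \<le> \<bar>c\<bar> + (\<Sum>i<length a. \<bar>a ! i\<bar>)" if "i < length a" for i
  proof -
    have "\<bar>a ! i\<bar> \<le> (\<Sum>i<length a. \<bar>a ! i\<bar>)" using that by (intro member_le_sum) auto
    then show ?thesis using abs_ge_zero[of c] by linarith
  qed
  have "0 \<le> (\<Sum>i<length a. \<bar>a ! i\<bar>)" by (intro sum_nonneg) auto
  then have "\<bar>c\<bar> \<le> int s" "\<forall>i<length a. \<bar>a ! i\<bar> \<le> int s" unfolding s_def using h by auto
  then show ?case by (intro exI[of _ s]) auto
next
  case (LGeq a c)
  define s where "s = nat (\<bar>c\<bar> + (\<Sum>i<length a. \<bar>a ! i\<bar>))"
  have h: "\<bar>a ! i\<bar> \<le> \<bar>c\<bar> + (\<Sum>i<length a. \<bar>a ! i\<bar>)" if "i < length a" for i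
  proof -
    have "\<bar>a ! i\<bar> \<le> (\<Sum>i<length a. \<bar>a ! i\<bar>)" using that by (intro member_le_sum) auto
    then show ?thesis using abs_ge_zero[of c] by linarith
  qed
  have "0 \<le> (\<Sum>i<length a. \<bar>a ! i\<bar>)" by (intro sum_nonneg) auto
  then have "\<bar>c\<bar> \<le> int s" "\<forall>i<length a. \<bar>a ! i\<bar> \<le> int s" unfolding s_def using h by auto
  then show ?case by (intro exI[of _ s]) auto
next
  case (LAnd S1 S2)
  then obtain s1 s2 where "\<forall>(a, c) \<in> atoms S1. (\<forall>i < length a. \<bar>a ! i\<bar> \<le> int s1) \<and> \<bar>c\<bar> \<le> int s1"
    "\<forall>(a, c) \<in> atoms S2. (\<forall>i < length a. \<bar>a ! i\<bar> \<le> int s2) \<and> \<bar>c\<bar> \<le> int s2" by blast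
  then show ?case by (intro exI[of _ "max s1 s2"]) fastforce
next
  case (LOr S1 S2)
  then obtain s1 s2 where "\<forall>(a, c) \<in> atoms S1. (\<forall>i < length a. \<bar>a ! i\<bar> \<le> int s1) \<and> \<bar>c\<bar> \<le> int s1"
    "\<forall>(a, c) \<in> atoms S2. (\<forall>i < length a. \<bar>a ! i\<bar> \<le> int s2) \<and> \<bar>c\<bar> \<le> int s2" by blast
  then show ?case by (intro exI[of _ "max s1 s2"]) fastforce
qed auto

lemma norm_bd:
  assumes "(a, c) \<in> atoms S"
  shows "(\<forall>i < length a. \<bar>a ! i\<bar> \<le> int (sys_norm S)) \<and> \<bar>c\<bar> \<le> int (sys_norm S)"
proof -
  have "\<forall>(a, c) \<in> atoms S. (\<forall>i < length a. \<bar>a ! i\<bar> \<le> int (sys_norm S)) \<and> \<bar>c\<bar> \<le> int (sys_norm S)"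
    unfolding sys_norm_def by (rule LeastI_ex[OF norm_exists])
  then show ?thesis using assms by auto
qed

lemma sat_transfer:
  assumes "\<forall>(a, c) \<in> atoms S. (ip a x = c \<longleftrightarrow> ip a y = c) \<and> (c \<le> ip a x \<longleftrightarrow> c \<le> ip a y)"
  shows "sat x S = sat y S"
  using assms by (induction S) auto

lemma dotr_sum: "dotr n f (\<lambda>i. \<Sum>x\<in>W. \<nu> x * v x i) = (\<Sum>x\<in>W. \<nu> x * dotr n f (v x))"
  unfolding dotr_def by (simp add: sum_distrib_left algebra_simps sum.swap[of _ W])

lemma numeric:
  fixes d s :: nat
  shows "(d+1)*d*((d+1)*(s+1))^d \<le> (2+d+d*s)^(2*d+1)"
proof -
  define N where "N = 2+d+d*s"
  have e1: "(d+1)*d*((d+1)*(s+1))^d = (d+1)^(d+1) * (d*(s+1)^d)"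
  proof -
    have p1: "((d+1)*(s+1))^d = (d+1)^d*(s+1)^d" by (rule power_mult_distrib)
    have p2: "(d+1)^(d+1) = (d+1)*(d+1)^d" by (rule power_Suc[of "d+1" d, unfolded Suc_eq_plus1])
    show ?thesis unfolding p1 p2 by (simp only: ac_simps)
  qed
  have a: "(d+1)^(d+1) \<le> N^(d+1)" unfolding N_def by (intro power_mono) auto
  have b: "d*(s+1)^d \<le> N^d"
  proof (cases "d = 0")
    case True then show ?thesis by simp
  next
    case False
    have "d \<le> d^d" using False
      by (metis One_nat_def less_one linorder_not_le power_increasing power_one_right)
    then have "d*(s+1)^d \<le> d^d*(s+1)^d" by simp
    also have "\<dots> = (d*(s+1))^d" by (rule power_mult_distrib[symmetric])
    also have "\<dots> \<le> N^d" unfolding N_def by (intro power_mono) (auto simp: algebra_simps)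
    finally show ?thesis .
  qed
  have "(d+1)^(d+1) * (d*(s+1)^d) \<le> N^(d+1) * N^d" using a b by (rule mult_le_mono)
  also have "\<dots> = N^(2*d+1)" by (metis power_add add.commute mult_2 add_Suc_right Suc_eq_plus1 add.assoc)
  finally show ?thesis using e1 unfolding N_def by simp
qed


theorem lemma22:
  fixes d :: nat and S :: lsys
  assumes "dim_sys d S"
    and "\<exists>x. length x = d \<and> sat x S"
  shows "\<exists>x. length x = d \<and> sat x S \<and>
           norm1 x \<le> (2 + int d + int d * int (sys_norm S)) ^ (2 * d + 1)"
proof -
  obtain y where ylen: "length y = d" and ysat: "sat y S" using assms(2) by blast
  define s where "s = sys_norm S"
  define n where "n = Suc d"
  define B where "B = s + 1"
  define H where "H = (n*B)^(n-1)"
  define \<sigma> where "\<sigma> = (\<lambda>j. if 0 \<le> y!j then 1 else -1::int)"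
  define orow where "orow = (\<lambda>j::nat. (\<lambda>i. if i = j then \<sigma> j else 0)::nat\<Rightarrow>int)"
  define trow where "trow = ((\<lambda>i. if i = d then 1 else 0)::nat\<Rightarrow>int)"
  define crow where "crow = (\<lambda>(a::int list) (b::int). ((\<lambda>i. if i < d then a!i else if i = d then -b else 0)::nat\<Rightarrow>int))"
  define nrow where "nrow = (\<lambda>(a::int list) (b::int). ((\<lambda>i. if i < d then -(a!i) else if i = d then b else 0)::nat\<Rightarrow>int))"
  define rf where "rf = (\<lambda>a c. if c < ip a y then {crow a (c+1)} else if ip a y = c then {crow a c, nrow a c} else {nrow a (c-1)})"
  define G where "G = orow ` {..<d} \<union> {trow} \<union> (\<Union>(a,c)\<in>atoms S. rf a c)"
  have alen: "length a = d" if "(a,c) \<in> atoms S" for a c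
    using assms(1) that unfolding dim_sys_def by auto
  have finG: "finite G" unfolding G_def rf_def using finite_atoms by auto
  have rfb: "\<forall>g\<in>rf a c. \<forall>i<n. \<bar>g i\<bar> \<le> int B" if ac: "(a,c) \<in> atoms S" for a c
  proof -
    have "\<forall>i<d. \<bar>a ! i\<bar> \<le> int s" "\<bar>c\<bar> \<le> int s" using norm_bd[OF ac] alen[OF ac] unfolding s_def by auto
    then show ?thesis unfolding rf_def crow_def nrow_def n_def B_def by auto
  qed
  have bd: "\<forall>g\<in>G. \<forall>i<n. \<bar>g i\<bar> \<le> int B"
  proof -
    have "\<forall>g\<in>orow ` {..<d} \<union> {trow}. \<forall>i<n. \<bar>g i\<bar> \<le> int B"
      unfolding orow_def trow_def B_def \<sigma>_def by auto
    then show ?thesis using rfb unfolding G_def by blast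
  qed
  have B1: "B \<ge> 1" unfolding B_def by simp
  have coord: "\<forall>i<n. \<exists>g\<in>G. (\<forall>k<n. k \<noteq> i \<longrightarrow> g k = 0) \<and> (g i = 1 \<or> g i = -1)"
  proof (intro allI impI)
    fix i assume i: "i < n"
    show "\<exists>g\<in>G. (\<forall>k<n. k \<noteq> i \<longrightarrow> g k = 0) \<and> (g i = 1 \<or> g i = -1)"
    proof (cases "i < d")
      case True
      then show ?thesis unfolding G_def by (intro bexI[of _ "orow i"]) (auto simp: orow_def \<sigma>_def)
    next
      case False
      then have "i = d" using i unfolding n_def by simp
      then show ?thesis unfolding G_def by (intro bexI[of _ trow]) (auto simp: trow_def)
    qed
  qed
  have dc: "dotr n (rv (crow a b)) U = (\<Sum>i<d. of_int (a!i) * U i) - of_int b * U d" for a b U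
  proof -
    have "dotr n (rv (crow a b)) U = (\<Sum>i<d. rv (crow a b) i * U i) + rv (crow a b) d * U d"
      unfolding dotr_def n_def by simp
    moreover have "(\<Sum>i<d. rv (crow a b) i * U i) = (\<Sum>i<d. of_int (a!i) * U i)"
      unfolding rv_def crow_def by (intro sum.cong) auto
    ultimately show ?thesis unfolding rv_def crow_def by simp
  qed
  have dn: "dotr n (rv (nrow a b)) U = - (\<Sum>i<d. of_int (a!i) * U i) + of_int b * U d" for a b U
  proof -
    have "dotr n (rv (nrow a b)) U = (\<Sum>i<d. rv (nrow a b) i * U i) + rv (nrow a b) d * U d"
      unfolding dotr_def n_def by simp
    moreover have "(\<Sum>i<d. rv (nrow a b) i * U i) = (\<Sum>i<d. - (of_int (a!i) * U i))"
      unfolding rv_def nrow_def by (intro sum.cong) auto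
    ultimately show ?thesis unfolding rv_def nrow_def by (simp add: sum_negf)
  qed
  have do: "dotr n (rv (orow j)) U = of_int (\<sigma> j) * U j" if j: "j < d" for j U
  proof -
    have "dotr n (rv (orow j)) U = (\<Sum>i<n. if i = j then of_int (\<sigma> j) * U j else 0)"
      unfolding dotr_def rv_def orow_def by (intro sum.cong) auto
    then show ?thesis using j unfolding n_def by simp
  qed
  have dt: "dotr n (rv trow) U = U d" for U
  proof -
    have "dotr n (rv trow) U = (\<Sum>i<n. if i = d then U d else 0)"
      unfolding dotr_def rv_def trow_def by (intro sum.cong) auto
    then show ?thesis unfolding n_def by simp
  qed
  have orowG: "orow j \<in> G" if "j < d" for j using that unfolding G_def by auto
  have trowG: "trow \<in> G" unfolding G_def by auto
  have rfG: "rf a c \<subseteq> G" if "(a,c) \<in> atoms S" for a c using that unfolding G_def by auto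
  define YI where "YI = (\<lambda>i. if i < d then y!i else if i = d then 1 else (0::int))"
  have ipU: "(\<Sum>i<d. of_int (a!i) * rv u i) = of_int (ip a (map u [0..<d]))" if "length a = d" for a u
    unfolding ip_def using that by (simp add: rv_def)
  have YIy: "map YI [0..<d] = y" using ylen unfolding YI_def by (intro nth_equalityI) auto
  have YK: "inK n G (rv YI)"
    unfolding inK_def
  proof
    fix g assume "g \<in> G"
    then consider (o) j where "j < d" "g = orow j" | (t) "g = trow"
      | (r) a c where "(a,c) \<in> atoms S" "g \<in> rf a c" unfolding G_def by auto
    then show "0 \<le> dotr n (rv g) (rv YI)"
    proof cases
      case o then show ?thesis using do[of j] unfolding rv_def YI_def \<sigma>_def by auto
    next
      case t then show ?thesis using dt unfolding rv_def YI_def by simp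
    next
      case r
      have e: "(\<Sum>i<d. of_int (a!i) * rv YI i) = of_int (ip a y)"
        using ipU[OF alen[OF r(1)], of YI] YIy by simp
      have d1: "rv YI d = 1" unfolding rv_def YI_def by simp
      show ?thesis using r(2) unfolding rf_def
        by (auto split: if_splits simp: dc dn e d1)
    qed
  qed
  have Ys: "supp n (rv YI)" unfolding supp_def rv_def YI_def n_def by simp
  obtain W \<mu> where W: "finite W" "\<forall>x\<in>W. good n G ((n*B)^(n-1)) x" "\<forall>x\<in>W. 0 \<le> \<mu> x"
    "\<forall>i. rv YI i = (\<Sum>x\<in>W. \<mu> x * rv x i)"
    using minkowski[OF finG bd B1 coord YK Ys] by blast
  have Wsupp: "\<forall>x\<in>W. supp n x" using W(2) unfolding good_def by simp
  obtain W' \<mu>' where W': "W' \<subseteq> W" "card W' \<le> n" "\<forall>x\<in>W'. 0 \<le> \<mu>' x"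
    "\<forall>i. rv YI i = (\<Sum>x\<in>W'. \<mu>' x * rv x i)"
    using carath[OF W(1) Wsupp W(3) W(4)] by blast
  have finW': "finite W'" using W(1) W'(1) finite_subset by blast
  have goodW': "good n G H x" if "x \<in> W'" for x using W(2) W'(1) that unfolding H_def by auto
  have xd0: "0 \<le> x d" if "x \<in> W'" for x
    using goodW'[OF that] trowG dt unfolding good_def inK_def rv_def by fastforce
  define fl where "fl = (\<lambda>x. if x d = 0 then \<lfloor>\<mu>' x\<rfloor> else 0)"
  define z where "z = (\<lambda>i. YI i - (\<Sum>x\<in>W'. fl x * x i))"
  define \<nu> where "\<nu> = (\<lambda>x. \<mu>' x - of_int (fl x))"
  have rvz: "rv z = (\<lambda>i. \<Sum>x\<in>W'. \<nu> x * rv x i)"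
  proof
    fix i
    have "rv z i = rv YI i - (\<Sum>x\<in>W'. of_int (fl x) * rv x i)" unfolding z_def rv_def by simp
    also have "\<dots> = (\<Sum>x\<in>W'. \<nu> x * rv x i)"
      using W'(4) unfolding \<nu>_def by (simp add: left_diff_distrib sum_subtractf)
    finally show "rv z i = (\<Sum>x\<in>W'. \<nu> x * rv x i)" .
  qed
  have \<nu>0: "0 \<le> \<nu> x" if "x \<in> W'" for x
    using W'(3) that unfolding \<nu>_def fl_def by auto
  have \<nu>1: "\<nu> x \<le> 1" if x: "x \<in> W'" for x
  proof (cases "x d = 0")
    case True
    have "\<mu>' x < real_of_int (\<lfloor>\<mu>' x\<rfloor> + 1)" by (rule floor_correct[THEN conjunct2])
    moreover have "\<nu> x = \<mu>' x - real_of_int \<lfloor>\<mu>' x\<rfloor>" unfolding \<nu>_def fl_def using True by simp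
    ultimately show ?thesis by linarith
  next
    case False
    then have xd1: "1 \<le> x d" using xd0[OF x] by simp
    have "1 = rv YI d" unfolding rv_def YI_def by simp
    also have "\<dots> = (\<Sum>x\<in>W'. \<mu>' x * rv x d)" using W'(4) by simp
    also have "\<dots> \<ge> \<mu>' x * rv x d"
      using finW' x W'(3) xd0 unfolding rv_def by (intro member_le_sum) auto
    finally have "\<mu>' x * rv x d \<le> 1" .
    moreover have "\<mu>' x \<le> \<mu>' x * rv x d"
    proof -
      have "0 \<le> \<mu>' x" using W'(3) x by blast
      moreover have "(1::real) \<le> real_of_int (x d)" using xd1 by simp
      ultimately show ?thesis unfolding rv_def using mult_left_mono[of 1 "real_of_int (x d)" "\<mu>' x"] by simp
    qed
    ultimately show ?thesis unfolding \<nu>_def fl_def using False by simp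
  qed
  have zd: "z d = 1"
  proof -
    have "(\<Sum>x\<in>W'. fl x * x d) = 0" unfolding fl_def by (intro sum.neutral) auto
    then show ?thesis unfolding z_def YI_def by simp
  qed
  have zK: "inK n G (rv z)"
    unfolding inK_def rvz dotr_sum
    using \<nu>0 goodW' unfolding good_def inK_def by (auto intro!: sum_nonneg)
  define xl where "xl = map z [0..<d]"
  have xllen: "length xl = d" unfolding xl_def by simp
  have rzd: "rv z d = 1" using zd unfolding rv_def by simp
  have ipx: "(\<Sum>i<d. of_int (a!i) * rv z i) = of_int (ip a xl)" if "length a = d" for a
    using ipU[OF that, of z] unfolding xl_def by simp
  have trans: "(ip a xl = c \<longleftrightarrow> ip a y = c) \<and> (c \<le> ip a xl \<longleftrightarrow> c \<le> ip a y)"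
    if ac: "(a,c) \<in> atoms S" for a c
  proof -
    have K: "0 \<le> dotr n (rv g) (rv z)" if "g \<in> rf a c" for g
      using zK rfG[OF ac] that unfolding inK_def by auto
    have e: "(\<Sum>i<d. of_int (a!i) * rv z i) = of_int (ip a xl)" using ipx[OF alen[OF ac]] .
    consider "c < ip a y" | "ip a y = c" | "ip a y < c" by linarith
    then show ?thesis
    proof cases
      case 1
      then have "0 \<le> dotr n (rv (crow a (c+1))) (rv z)" using K unfolding rf_def by simp
      then have "c + 1 \<le> ip a xl" unfolding dc e rzd by simp
      then show ?thesis using 1 by auto
    next
      case 2
      then have "0 \<le> dotr n (rv (crow a c)) (rv z)" "0 \<le> dotr n (rv (nrow a c)) (rv z)"
        using K unfolding rf_def by auto
      then have "ip a xl = c" unfolding dc dn e rzd by simp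
      then show ?thesis using 2 by auto
    next
      case 3
      then have "0 \<le> dotr n (rv (nrow a (c-1))) (rv z)" using K unfolding rf_def by auto
      then have "ip a xl \<le> c - 1" unfolding dn e rzd by simp
      then show ?thesis using 3 by auto
    qed
  qed
  have satx: "sat xl S" using sat_transfer[of S xl y] trans ysat by auto
  have absz: "\<bar>rv z i\<bar> = of_int (\<sigma> i) * rv z i" if i: "i < d" for i
  proof -
    have "0 \<le> of_int (\<sigma> i) * rv z i" using zK orowG[OF i] do[OF i] unfolding inK_def by metis
    then show ?thesis unfolding \<sigma>_def by (auto split: if_splits)
  qed
  have "real_of_int (norm1 xl) = (\<Sum>i<d. \<bar>rv z i\<bar>)"
    unfolding norm1_def xllen unfolding xl_def rv_def by simp
  also have "\<dots> = (\<Sum>i<d. of_int (\<sigma> i) * rv z i)" using absz by simp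
  also have "\<dots> = (\<Sum>x\<in>W'. \<nu> x * (\<Sum>i<d. of_int (\<sigma> i) * rv x i))"
    unfolding rvz by (simp add: sum_distrib_left algebra_simps sum.swap[of _ W'])
  also have "\<dots> \<le> (\<Sum>x\<in>W'. real d * real H)"
  proof (intro sum_mono)
    fix x assume x: "x \<in> W'"
    have P0: "0 \<le> (\<Sum>i<d. of_int (\<sigma> i) * rv x i)"
    proof (intro sum_nonneg)
      fix i assume "i \<in> {..<d}"
      then have i: "i < d" by simp
      have "0 \<le> dotr n (rv (orow i)) (rv x)" using goodW'[OF x] orowG[OF i] unfolding good_def inK_def by blast
      then show "0 \<le> real_of_int (\<sigma> i) * rv x i" using do[OF i] by simp
    qed
    have "(\<Sum>i<d. of_int (\<sigma> i) * rv x i) \<le> (\<Sum>i<d. real H)"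
    proof (intro sum_mono)
      fix i assume "i \<in> {..<d}"
      then have "\<bar>x i\<bar> \<le> int H" using goodW'[OF x] unfolding good_def n_def by auto
      then show "of_int (\<sigma> i) * rv x i \<le> real H" unfolding \<sigma>_def rv_def by (auto split: if_splits)
    qed
    then have "(\<Sum>i<d. of_int (\<sigma> i) * rv x i) \<le> real d * real H" by simp
    then show "\<nu> x * (\<Sum>i<d. of_int (\<sigma> i) * rv x i) \<le> real d * real H"
      using \<nu>0[OF x] \<nu>1[OF x] P0 by (meson mult_left_le_one_le order_trans)
  qed
  also have "\<dots> = real (card W') * (real d * real H)" by simp
  also have "\<dots> \<le> real n * (real d * real H)" using W'(2) by (intro mult_right_mono) auto
  also have "\<dots> = real ((d+1)*d*((d+1)*(s+1))^d)" unfolding n_def H_def B_def by (simp add: algebra_simps)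
  also have "\<dots> \<le> real ((2+d+d*s)^(2*d+1))" using numeric by (subst of_nat_le_iff) blast
  finally have "norm1 xl \<le> int ((2+d+d*s)^(2*d+1))" by linarith
  moreover have "int ((2+d+d*s)^(2*d+1)) = (2 + int d + int d * int s) ^ (2 * d + 1)"
    by (simp only: of_nat_power of_nat_add of_nat_mult of_nat_numeral)
  ultimately have "norm1 xl \<le> (2 + int d + int d * int (sys_norm S)) ^ (2 * d + 1)"
    unfolding s_def by simp
  then show ?thesis using xllen satx by blast
qed

end
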